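(* Let $s,r\in\mathbb{N}$ and let $\mathcal{C}$ be a class of finite graphs such that each $G\in\mathcal{C}$ is obtained from some complete bipartite graph $K_{n,m}$ with $n\le m\le 2^{sn+r}$ by possibly adding new edges (on the same vertex set). Then $\mathcal{C}$ is $\mathrm{MSO}_2$-orderable.
   Context: For $G=\langle V,E\rangle$, $\lceil G\rceil=\langle V\cup E,\mathrm{inc}\rangle$ (universe $V\cup E$, incidence relation). An MSO-formula $\varphi(x,y;Z_0,\dots,Z_{k-1})$ defines an order on a class $\mathcal{K}$ of structures if for every non-empty $\mathfrak{A}\in\mathcal{K}$ there are $P_0,\dots,P_{k-1}\subseteq A$ with $\{(a,b):\mathfrak{A}\models\varphi(a,b;\bar P)\}$ a linear order on $A$. A graph class is $\mathrm{MSO}_2$-orderable if some MSO-formula defines an order on $\{\lceil G\rceil : G\in\mathcal{C}\}$. *)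

theory Defs
  imports Main
begin

type_synonym 'v graph = "'v set \<times> 'v set set"

definition finite_graph :: "'v graph \<Rightarrow> bool" where
  "finite_graph G \<longleftrightarrow> finite (fst G) \<and>
     (\<forall>e \<in> snd G. \<exists>u v. e = {u, v} \<and> u \<noteq> v \<and> u \<in> fst G \<and> v \<in> fst G)"

definition extends_Knm :: "'v graph \<Rightarrow> nat \<Rightarrow> nat \<Rightarrow> bool" where
  "extends_Knm G n m \<longleftrightarrow> (\<exists>A B. A \<inter> B = {} \<and> A \<union> B = fst G \<and>
     card A = n \<and> card B = m \<and> (\<forall>a\<in>A. \<forall>b\<in>B. {a, b} \<in> snd G))"

type_synonym 'a rstructure = "'a set \<times> ('a \<times> 'a) set"

definition incidence :: "'v graph \<Rightarrow> ('v + 'v set) rstructure" where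
  "incidence G = (Inl ` fst G \<union> Inr ` snd G,
                  {(Inl v, Inr e) | v e. v \<in> fst G \<and> e \<in> snd G \<and> v \<in> e})"

datatype mso =
    Rel nat nat
  | Eq nat nat
  | Mem nat nat
  | Neg mso
  | Conj mso mso
  | Ex1 nat mso
  | Ex2 nat mso

fun sat :: "'a rstructure \<Rightarrow> (nat \<Rightarrow> 'a) \<Rightarrow> (nat \<Rightarrow> 'a set) \<Rightarrow> mso \<Rightarrow> bool" where
  "sat S \<alpha> \<beta> (Rel i j) = ((\<alpha> i, \<alpha> j) \<in> snd S)"
| "sat S \<alpha> \<beta> (Eq i j) = (\<alpha> i = \<alpha> j)"
| "sat S \<alpha> \<beta> (Mem i j) = (\<alpha> i \<in> \<beta> j)"
| "sat S \<alpha> \<beta> (Neg \<phi>) = (\<not> sat S \<alpha> \<beta> \<phi>)"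
| "sat S \<alpha> \<beta> (Conj \<phi> \<psi>) = (sat S \<alpha> \<beta> \<phi> \<and> sat S \<alpha> \<beta> \<psi>)"
| "sat S \<alpha> \<beta> (Ex1 i \<phi>) = (\<exists>a \<in> fst S. sat S (\<alpha>(i := a)) \<beta> \<phi>)"
| "sat S \<alpha> \<beta> (Ex2 j \<phi>) = (\<exists>P. P \<subseteq> fst S \<and> sat S \<alpha> (\<beta>(j := P)) \<phi>)"

fun fo_free :: "mso \<Rightarrow> nat set" where
  "fo_free (Rel i j) = {i, j}"
| "fo_free (Eq i j) = {i, j}"
| "fo_free (Mem i j) = {i}"
| "fo_free (Neg \<phi>) = fo_free \<phi>"
| "fo_free (Conj \<phi> \<psi>) = fo_free \<phi> \<union> fo_free \<psi>"
| "fo_free (Ex1 i \<phi>) = fo_free \<phi> - {i}"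
| "fo_free (Ex2 j \<phi>) = fo_free \<phi>"

fun so_free :: "mso \<Rightarrow> nat set" where
  "so_free (Rel i j) = {}"
| "so_free (Eq i j) = {}"
| "so_free (Mem i j) = {j}"
| "so_free (Neg \<phi>) = so_free \<phi>"
| "so_free (Conj \<phi> \<psi>) = so_free \<phi> \<union> so_free \<psi>"
| "so_free (Ex1 i \<phi>) = so_free \<phi>"
| "so_free (Ex2 j \<phi>) = so_free \<phi> - {j}"

definition defines_order :: "mso \<Rightarrow> nat \<Rightarrow> 'a rstructure set \<Rightarrow> bool" where
  "defines_order \<phi> k K \<longleftrightarrow>
     fo_free \<phi> \<subseteq> {0, 1} \<and> so_free \<phi> \<subseteq> {..<k} \<and>
     (\<forall>S \<in> K. fst S \<noteq> {} \<longrightarrow>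
        (\<exists>P :: nat \<Rightarrow> 'a set. (\<forall>i<k. P i \<subseteq> fst S) \<and>
           linear_order_on (fst S)
             {(a, b). a \<in> fst S \<and> b \<in> fst S \<and>
                      sat S (\<lambda>i. if i = 0 then a else b) P \<phi>}))"

definition MSO2_orderable :: "'v graph set \<Rightarrow> bool" where
  "MSO2_orderable C \<longleftrightarrow> (\<exists>\<phi> k. defines_order \<phi> k (incidence ` C))"

end

theory Submission
  imports Defs "HOL-Library.FuncSet"
begin


definition Or :: "mso \<Rightarrow> mso \<Rightarrow> mso" where "Or a b = Neg (Conj (Neg a) (Neg b))"
definition Imp :: "mso \<Rightarrow> mso \<Rightarrow> mso" where "Imp a b = Neg (Conj a (Neg b))"
definition Iff :: "mso \<Rightarrow> mso \<Rightarrow> mso" where "Iff a b = Conj (Imp a b) (Imp b a)"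
definition All1 :: "nat \<Rightarrow> mso \<Rightarrow> mso" where "All1 i a = Neg (Ex1 i (Neg a))"

lemma sat_derived[simp]:
  "sat S \<alpha> \<beta> (Or a b) = (sat S \<alpha> \<beta> a \<or> sat S \<alpha> \<beta> b)"
  "sat S \<alpha> \<beta> (Imp a b) = (sat S \<alpha> \<beta> a \<longrightarrow> sat S \<alpha> \<beta> b)"
  "sat S \<alpha> \<beta> (Iff a b) = (sat S \<alpha> \<beta> a \<longleftrightarrow> sat S \<alpha> \<beta> b)"
  "sat S \<alpha> \<beta> (All1 i a) = (\<forall>x\<in>fst S. sat S (\<alpha>(i:=x)) \<beta> a)"
  by (auto simp: Or_def Imp_def Iff_def All1_def)

lemma free_derived[simp]:
  "fo_free (Or a b) = fo_free a \<union> fo_free b"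
  "fo_free (Imp a b) = fo_free a \<union> fo_free b"
  "fo_free (Iff a b) = fo_free a \<union> fo_free b"
  "fo_free (All1 i a) = fo_free a - {i}"
  "so_free (Or a b) = so_free a \<union> so_free b"
  "so_free (Imp a b) = so_free a \<union> so_free b"
  "so_free (Iff a b) = so_free a \<union> so_free b"
  "so_free (All1 i a) = so_free a"
  by (auto simp: Or_def Imp_def Iff_def All1_def)

fun chain :: "(nat \<Rightarrow> nat \<Rightarrow> mso) list \<Rightarrow> nat \<Rightarrow> nat \<Rightarrow> mso" where
  "chain [] i j = Eq i i"
| "chain (K # Ks) i j = Or (Neg (K j i)) (Conj (K i j) (chain Ks i j))"

fun lexle :: "('a \<Rightarrow> nat) list \<Rightarrow> 'a \<Rightarrow> 'a \<Rightarrow> bool" where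
  "lexle [] x y = True"
| "lexle (k # ks) x y = (k x < k y \<or> (k x \<le> k y \<and> lexle ks x y))"

definition good :: "'a rstructure \<Rightarrow> (nat \<Rightarrow> 'a set) \<Rightarrow> nat set \<Rightarrow> (nat \<Rightarrow> nat \<Rightarrow> mso) \<Rightarrow> ('a \<Rightarrow> nat) \<Rightarrow> bool" where
  "good S \<beta> Bd K key \<longleftrightarrow> (\<forall>\<alpha> i j. i \<notin> Bd \<longrightarrow> j \<notin> Bd \<longrightarrow> \<alpha> i \<in> fst S \<longrightarrow> \<alpha> j \<in> fst S \<longrightarrow>
      (sat S \<alpha> \<beta> (K i j) \<longleftrightarrow> key (\<alpha> i) \<le> key (\<alpha> j)))"

lemma chain_sat:
  assumes "list_all2 (good S \<beta> Bd) Ks keys" "i \<notin> Bd" "j \<notin> Bd" "\<alpha> i \<in> fst S" "\<alpha> j \<in> fst S"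
  shows "sat S \<alpha> \<beta> (chain Ks i j) \<longleftrightarrow> lexle keys (\<alpha> i) (\<alpha> j)"
  using assms(1)
proof (induction Ks keys rule: list_all2_induct)
  case Nil then show ?case by simp
next
  case (Cons K Ks k ks)
  have "sat S \<alpha> \<beta> (K j i) \<longleftrightarrow> k (\<alpha> j) \<le> k (\<alpha> i)" "sat S \<alpha> \<beta> (K i j) \<longleftrightarrow> k (\<alpha> i) \<le> k (\<alpha> j)"
    using Cons.hyps(1) assms(2-5) unfolding good_def by blast+
  then show ?case using Cons.IH by auto
qed

lemma chain_fo: "(\<And>K i j. K \<in> set Ks \<Longrightarrow> fo_free (K i j) \<subseteq> {i, j}) \<Longrightarrow> fo_free (chain Ks i j) \<subseteq> {i, j}"
  by (induction Ks) (auto, blast+)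

lemma chain_so: "(\<And>K i j. K \<in> set Ks \<Longrightarrow> so_free (K i j) \<subseteq> Z) \<Longrightarrow> so_free (chain Ks i j) \<subseteq> Z"
  by (induction Ks) auto

lemma lexle_refl: "lexle ks x x" by (induction ks) auto
lemma lexle_total: "lexle ks x y \<or> lexle ks y x" by (induction ks) auto
lemma lexle_trans: "lexle ks x y \<Longrightarrow> lexle ks y z \<Longrightarrow> lexle ks x z"
proof (induction ks)
  case (Cons k ks) then show ?case by auto
qed simp
lemma lexle_antisym: "lexle ks x y \<Longrightarrow> lexle ks y x \<Longrightarrow> k \<in> set ks \<Longrightarrow> k x = k y"
  by (induction ks) auto

lemma sum_pow2_lt: "finite Y \<Longrightarrow> Y \<subseteq> {..<p} \<Longrightarrow> (\<Sum>i\<in>Y. (2::nat)^i) < 2^p"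
proof -
  assume "finite Y" "Y \<subseteq> {..<p}"
  then have "(\<Sum>i\<in>Y. (2::nat)^i) \<le> (\<Sum>i<p. 2^i)" by (intro sum_mono2) auto
  also have "(\<Sum>i<p. (2::nat)^i) < 2^p" by (induction p) auto
  finally show ?thesis .
qed

lemma bin_lt1:
  assumes "finite X" "finite Y" "p \<in> X" "p \<notin> Y" "\<forall>q>p. q \<in> X \<longleftrightarrow> q \<in> Y"
  shows "(\<Sum>i\<in>Y. (2::nat)^i) < (\<Sum>i\<in>X. 2^i)"
proof -
  define H where "H = {q\<in>X. p < q}"
  define L where "L = {q\<in>Y. q < p}"
  have fH: "finite H" using assms(1) unfolding H_def by simp
  have fL: "finite L" using assms(2) unfolding L_def by simp
  have Y: "Y = H \<union> L" using assms(4,5) unfolding H_def L_def by (auto simp: not_less_iff_gr_or_eq)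
  have d1: "H \<inter> L = {}" unfolding H_def L_def by auto
  have s1: "(\<Sum>i\<in>Y. (2::nat)^i) = (\<Sum>i\<in>H. 2^i) + (\<Sum>i\<in>L. 2^i)"
    unfolding Y using sum.union_disjoint[OF fH fL d1] .
  have s2: "(\<Sum>i\<in>L. (2::nat)^i) < 2^p" by (rule sum_pow2_lt[OF fL]) (auto simp: L_def)
  have d2: "H \<inter> {p} = {}" unfolding H_def by auto
  have s3: "(\<Sum>i\<in>H \<union> {p}. (2::nat)^i) = (\<Sum>i\<in>H. 2^i) + 2^p"
    using sum.union_disjoint[OF fH _ d2] by simp
  have sub: "H \<union> {p} \<subseteq> X" using assms(3) unfolding H_def by auto
  have s4: "(\<Sum>i\<in>H \<union> {p}. (2::nat)^i) \<le> (\<Sum>i\<in>X. 2^i)"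
    by (rule sum_mono2[OF assms(1) sub]) simp
  show ?thesis using s1 s2 s3 s4 by linarith
qed

lemma bin_lt:
  assumes "finite X" "finite Y"
  shows "(\<exists>p\<in>X. p \<notin> Y \<and> (\<forall>q>p. q \<in> X \<longleftrightarrow> q \<in> Y)) \<longleftrightarrow> (\<Sum>i\<in>Y. (2::nat)^i) < (\<Sum>i\<in>X. 2^i)"
proof
  assume "\<exists>p\<in>X. p \<notin> Y \<and> (\<forall>q>p. q \<in> X \<longleftrightarrow> q \<in> Y)"
  then show "(\<Sum>i\<in>Y. (2::nat)^i) < (\<Sum>i\<in>X. 2^i)" using bin_lt1 assms by blast
next
  assume lt: "(\<Sum>i\<in>Y. (2::nat)^i) < (\<Sum>i\<in>X. 2^i)"
  then have "X \<noteq> Y" by auto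
  define D where "D = (X - Y) \<union> (Y - X)"
  have D: "finite D" "D \<noteq> {}" using assms \<open>X \<noteq> Y\<close> unfolding D_def by auto
  define p where "p = Max D"
  have pD: "p \<in> D" using D unfolding p_def by simp
  have above: "\<forall>q>p. q \<in> X \<longleftrightarrow> q \<in> Y"
  proof (intro allI impI)
    fix q assume "p < q"
    then have "q \<notin> D" using D unfolding p_def using Max_ge leD by blast
    then show "q \<in> X \<longleftrightarrow> q \<in> Y" unfolding D_def by auto
  qed
  show "\<exists>p\<in>X. p \<notin> Y \<and> (\<forall>q>p. q \<in> X \<longleftrightarrow> q \<in> Y)"
  proof (cases "p \<in> X")
    case True then show ?thesis using pD above unfolding D_def by auto
  next
    case False
    then have "p \<in> Y" "p \<notin> X" using pD unfolding D_def by auto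
    then have "(\<Sum>i\<in>X. (2::nat)^i) < (\<Sum>i\<in>Y. 2^i)" using bin_lt1[of Y X p] assms above by auto
    then show ?thesis using lt by simp
  qed
qed

lemma bin_inj:
  assumes "finite X" "finite Y" "(\<Sum>i\<in>Y. (2::nat)^i) = (\<Sum>i\<in>X. 2^i)"
  shows "X = Y"
proof (rule ccontr)
  assume "X \<noteq> Y"
  define D where "D = (X - Y) \<union> (Y - X)"
  have D: "finite D" "D \<noteq> {}" using assms \<open>X \<noteq> Y\<close> unfolding D_def by auto
  define p where "p = Max D"
  have pD: "p \<in> D" using D unfolding p_def by simp
  have above: "\<forall>q>p. q \<in> X \<longleftrightarrow> q \<in> Y"
  proof (intro allI impI)
    fix q assume "p < q"
    then have "q \<notin> D" using D unfolding p_def using Max_ge leD by blast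
    then show "q \<in> X \<longleftrightarrow> q \<in> Y" unfolding D_def by auto
  qed
  show False
  proof (cases "p \<in> X")
    case True then show ?thesis using pD above bin_lt1[of X Y p] assms unfolding D_def by auto
  next
    case False
    then show ?thesis using pD above bin_lt1[of Y X p] assms unfolding D_def by auto
  qed
qed

lemma lexblock:
  assumes "finite P" "inj_on kp P"
  shows "(\<exists>p\<in>P. bt x p \<and> \<not> bt y p \<and> (\<forall>q\<in>P. kp p < kp q \<longrightarrow> (bt x q \<longleftrightarrow> bt y q)))
     \<longleftrightarrow> (\<Sum>p\<in>{p\<in>P. bt y p}. (2::nat)^kp p) < (\<Sum>p\<in>{p\<in>P. bt x p}. 2^kp p)"
proof -
  let ?X = "kp ` {p\<in>P. bt x p}" and ?Y = "kp ` {p\<in>P. bt y p}"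
  have sx: "(\<Sum>p\<in>{p\<in>P. bt x p}. (2::nat)^kp p) = (\<Sum>i\<in>?X. 2^i)"
    by (subst sum.reindex) (use assms in \<open>auto intro: inj_on_subset\<close>)
  have sy: "(\<Sum>p\<in>{p\<in>P. bt y p}. (2::nat)^kp p) = (\<Sum>i\<in>?Y. 2^i)"
    by (subst sum.reindex) (use assms in \<open>auto intro: inj_on_subset\<close>)
  have memX: "\<And>p. p \<in> P \<Longrightarrow> kp p \<in> ?X \<longleftrightarrow> bt x p" using assms(2) by (auto dest: inj_onD)
  have memY: "\<And>p. p \<in> P \<Longrightarrow> kp p \<in> ?Y \<longleftrightarrow> bt y p" using assms(2) by (auto dest: inj_onD)
  have "(\<exists>p\<in>P. bt x p \<and> \<not> bt y p \<and> (\<forall>q\<in>P. kp p < kp q \<longrightarrow> (bt x q \<longleftrightarrow> bt y q)))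
     \<longleftrightarrow> (\<exists>i\<in>?X. i \<notin> ?Y \<and> (\<forall>q>i. q \<in> ?X \<longleftrightarrow> q \<in> ?Y))"
  proof
    assume "\<exists>p\<in>P. bt x p \<and> \<not> bt y p \<and> (\<forall>q\<in>P. kp p < kp q \<longrightarrow> (bt x q \<longleftrightarrow> bt y q))"
    then obtain p where p: "p \<in> P" "bt x p" "\<not> bt y p" "\<forall>q\<in>P. kp p < kp q \<longrightarrow> (bt x q \<longleftrightarrow> bt y q)" by blast
    show "\<exists>i\<in>?X. i \<notin> ?Y \<and> (\<forall>q>i. q \<in> ?X \<longleftrightarrow> q \<in> ?Y)"
    proof (intro bexI[of _ "kp p"] conjI allI impI)
      show "kp p \<in> ?X" using p by auto
      show "kp p \<notin> ?Y" using p memY by auto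
      fix q assume "kp p < q"
      show "q \<in> ?X \<longleftrightarrow> q \<in> ?Y"
      proof
        assume "q \<in> ?X" then obtain z where "z \<in> P" "bt x z" "q = kp z" by auto
        then show "q \<in> ?Y" using p(4) \<open>kp p < q\<close> memY by auto
      next
        assume "q \<in> ?Y" then obtain z where "z \<in> P" "bt y z" "q = kp z" by auto
        then show "q \<in> ?X" using p(4) \<open>kp p < q\<close> memX by auto
      qed
    qed
  next
    assume "\<exists>i\<in>?X. i \<notin> ?Y \<and> (\<forall>q>i. q \<in> ?X \<longleftrightarrow> q \<in> ?Y)"
    then obtain p where p: "p \<in> P" "bt x p" "kp p \<notin> ?Y" "\<forall>q>kp p. q \<in> ?X \<longleftrightarrow> q \<in> ?Y" by blast
    show "\<exists>p\<in>P. bt x p \<and> \<not> bt y p \<and> (\<forall>q\<in>P. kp p < kp q \<longrightarrow> (bt x q \<longleftrightarrow> bt y q))"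
      using p memX memY by (intro bexI[of _ p]) auto
  qed
  also have "\<dots> \<longleftrightarrow> (\<Sum>i\<in>?Y. (2::nat)^i) < (\<Sum>i\<in>?X. 2^i)"
    by (rule bin_lt) (use assms in auto)
  finally show ?thesis using sx sy by simp
qed

lemma rank_key:
  assumes "finite P" "\<forall>p\<in>P. \<forall>q\<in>P. R p q \<or> R q p"
    "\<forall>p\<in>P. \<forall>q\<in>P. \<forall>z\<in>P. R p q \<longrightarrow> R q z \<longrightarrow> R p z"
  defines "kp \<equiv> \<lambda>p. card {z\<in>P. \<not> R p z}"
  shows "\<forall>p\<in>P. \<forall>q\<in>P. R q p \<longleftrightarrow> kp q \<le> kp p"
proof (intro ballI)
  fix p q assume pq: "p \<in> P" "q \<in> P"
  have sub: "\<And>a b. a \<in> P \<Longrightarrow> b \<in> P \<Longrightarrow> R a b \<Longrightarrow> {z\<in>P. \<not> R a z} \<subseteq> {z\<in>P. \<not> R b z}"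
    using assms(3) by blast
  show "R q p \<longleftrightarrow> kp q \<le> kp p"
  proof
    assume "R q p" then show "kp q \<le> kp p" unfolding kp_def using sub pq assms(1) by (intro card_mono) auto
  next
    assume le: "kp q \<le> kp p"
    show "R q p"
    proof (rule ccontr)
      assume "\<not> R q p"
      then have "R p q" using assms(2) pq by blast
      have "R p p" using assms(2) pq by blast
      have "{z\<in>P. \<not> R p z} \<subset> {z\<in>P. \<not> R q z}" using sub[OF pq \<open>R p q\<close>] \<open>\<not> R q p\<close> \<open>R p p\<close> pq by blast
      then have "kp p < kp q" unfolding kp_def using assms(1) by (intro psubset_card_mono) auto
      then show False using le by simp
    qed
  qed
qed




definition bitf :: "nat \<Rightarrow> nat \<Rightarrow> nat \<Rightarrow> mso" where
  "bitf z x p = Ex1 12 (Conj (Mem 12 z) (Conj (Rel x 12) (Rel p 12)))"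
definition stair :: "nat \<Rightarrow> nat \<Rightarrow> mso" where
  "stair i j = All1 10 (Imp (Conj (Neg (Mem 10 1)) (Conj (Mem i 1) (Ex1 11 (Conj (Mem 11 2) (Conj (Rel i 11) (Rel 10 11))))))
      (Conj (Mem j 1) (Ex1 11 (Conj (Mem 11 2) (Conj (Rel j 11) (Rel 10 11))))))"
definition Rblk :: "nat \<Rightarrow> nat \<Rightarrow> nat \<Rightarrow> mso" where
  "Rblk z i j = Imp (Mem i z) (Mem j z)"
definition Fblk :: "nat \<Rightarrow> nat \<Rightarrow> nat \<Rightarrow> mso" where
  "Fblk z i j = Neg (Ex1 13 (Conj (Mem 13 1) (Conj (bitf z i 13) (Conj (Neg (bitf z j 13))
     (All1 14 (Imp (Conj (Mem 14 1) (Neg (stair 14 13))) (Iff (bitf z i 14) (bitf z j 14))))))))"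
definition vblocks :: "nat \<Rightarrow> nat \<Rightarrow> (nat \<Rightarrow> nat \<Rightarrow> mso) list" where
  "vblocks r s = stair # map Rblk [3..<3+r] @ map Fblk [3+r..<3+r+s]"
definition isV :: "nat \<Rightarrow> mso" where "isV p = Neg (Ex1 22 (Rel 22 p))"
definition Eblk :: "nat \<Rightarrow> nat \<Rightarrow> nat \<Rightarrow> nat \<Rightarrow> mso" where
  "Eblk r s i j = Neg (Ex1 20 (Conj (isV 20) (Conj (Rel 20 i) (Conj (Neg (Rel 20 j))
     (All1 21 (Imp (Conj (isV 21) (Neg (chain (vblocks r s) 21 20))) (Iff (Rel 21 i) (Rel 21 j))))))))"
definition phi :: "nat \<Rightarrow> nat \<Rightarrow> mso" where
  "phi r s = chain (Eblk r s # vblocks r s) 0 1"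

lemma good_mono: "good S \<beta> Bd K k \<Longrightarrow> Bd \<subseteq> Bd' \<Longrightarrow> good S \<beta> Bd' K k"
  unfolding good_def by blast

lemma fo_vblocks: "K \<in> set (vblocks r s) \<Longrightarrow> fo_free (K i j) \<subseteq> {i, j}"
  by (auto simp: vblocks_def stair_def Rblk_def Fblk_def bitf_def)
lemma so_vblocks: "K \<in> set (vblocks r s) \<Longrightarrow> so_free (K i j) \<subseteq> {..<3+r+s}"
  by (auto simp: vblocks_def stair_def Rblk_def Fblk_def bitf_def)
lemma fo_Eblk: "fo_free (Eblk r s i j) \<subseteq> {i, j}"
proof -
  have "fo_free (chain (vblocks r s) 21 20) \<subseteq> {21, 20}" by (rule chain_fo) (rule fo_vblocks)
  then show ?thesis by (auto simp: Eblk_def isV_def)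
qed
lemma so_Eblk: "so_free (Eblk r s i j) \<subseteq> {..<3+r+s}"
proof -
  have "so_free (chain (vblocks r s) 21 20) \<subseteq> {..<3+r+s}" by (rule chain_so) (rule so_vblocks)
  then show ?thesis by (auto simp: Eblk_def isV_def)
qed
lemma fo_phi: "fo_free (phi r s) \<subseteq> {0, 1}"
  unfolding phi_def
proof (rule chain_fo)
  fix K i j assume "K \<in> set (Eblk r s # vblocks r s)"
  then show "fo_free (K i j) \<subseteq> {i, j}" by (cases "K = Eblk r s") (use fo_Eblk[of r s i j] fo_vblocks[of K r s i j] in auto)
qed
lemma so_phi: "so_free (phi r s) \<subseteq> {..<3+r+s}"
  unfolding phi_def
proof (rule chain_so)
  fix K i j assume "K \<in> set (Eblk r s # vblocks r s)"
  then show "so_free (K i j) \<subseteq> {..<3+r+s}" by (cases "K = Eblk r s") (use so_Eblk[of r s i j] so_vblocks[of K r s i j] in auto)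
qed




locale gs =
  fixes V :: "'v set" and E :: "'v set set" and A B :: "'v set" and n s r :: nat
    and f g :: "nat \<Rightarrow> 'v" and code :: "'v \<Rightarrow> nat set \<times> (nat \<Rightarrow> 'v set)"
  assumes fg: "finite_graph (V, E)"
    and AB: "A \<inter> B = {}" "A \<union> B = V"
    and compl: "\<forall>a\<in>A. \<forall>b\<in>B. {a, b} \<in> E"
    and fbij: "bij_betw f {0..<n} A"
    and ginj: "inj_on g {0..<n}" and gB: "g ` {0..<n} \<subseteq> B"
    and cinj: "inj_on code B" and cB: "code ` B \<subseteq> Pow {..<r} \<times> ({..<s} \<rightarrow>\<^sub>E Pow A)"
begin

definition U :: "('v + 'v set) set" where "U = Inl ` V \<union> Inr ` E"
definition Rl :: "(('v + 'v set) \<times> ('v + 'v set)) set" where "Rl = {(Inl v, Inr e) | v e. v \<in> V \<and> e \<in> E \<and> v \<in> e}"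
definition Sst :: "'v set set" where "Sst = {{f i, g j} | i j. i \<le> j \<and> j < n}"
definition Ft :: "nat \<Rightarrow> 'v set set" where "Ft t = {{a, b} | a b. a \<in> A \<and> b \<in> B \<and> a \<in> snd (code b) t}"
definition \<beta> :: "nat \<Rightarrow> ('v + 'v set) set" where "\<beta> z = (if z = 1 then Inl ` A else if z = 2 then Inr ` Sst
   else if 3 \<le> z \<and> z < 3 + r then {Inl b | b. b \<in> B \<and> z - 3 \<in> fst (code b)}
   else if 3 + r \<le> z \<and> z < 3 + r + s then Inr ` Ft (z - 3 - r) else {})"
definition Nst :: "'v + 'v set \<Rightarrow> ('v + 'v set) set" where "Nst x = {b\<in>U. b \<notin> Inl ` A \<and> x \<in> Inl ` A \<and> (\<exists>e\<in>U. e \<in> Inr ` Sst \<and> (x, e) \<in> Rl \<and> (b, e) \<in> Rl)}"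
definition kS :: "'v + 'v set \<Rightarrow> nat" where "kS x = card (Nst x)"
definition kR :: "nat \<Rightarrow> 'v + 'v set \<Rightarrow> nat" where "kR z x = (if x \<in> \<beta> z then 1 else (0::nat))"
definition bitF :: "nat \<Rightarrow> 'v + 'v set \<Rightarrow> 'v + 'v set \<Rightarrow> bool" where "bitF z x p = (\<exists>e\<in>U. e \<in> \<beta> z \<and> (x, e) \<in> Rl \<and> (p, e) \<in> Rl)"
definition kF :: "nat \<Rightarrow> 'v + 'v set \<Rightarrow> nat" where "kF z x = (\<Sum>p\<in>{p\<in>Inl ` A. bitF z x p}. (2::nat) ^ kS p)"
definition vkeys :: "('v + 'v set \<Rightarrow> nat) list" where "vkeys = kS # map kR [3..<3+r] @ map kF [3+r..<3+r+s]"
definition P :: "('v + 'v set) set" where "P = {p\<in>U. \<not> (\<exists>z\<in>U. (z, p) \<in> Rl)}"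
definition kP :: "'v + 'v set \<Rightarrow> nat" where "kP p = card {z\<in>P. \<not> lexle vkeys p z}"
definition kE :: "'v + 'v set \<Rightarrow> nat" where "kE x = (\<Sum>p\<in>{p\<in>P. (p, x) \<in> Rl}. (2::nat) ^ kP p)"

lemma inc: "incidence (V, E) = (U, Rl)" by (simp add: incidence_def U_def Rl_def)

lemma finV: "finite V" using fg by (simp add: finite_graph_def)
lemma Esub: "e \<in> E \<Longrightarrow> \<exists>u v. e = {u, v} \<and> u \<noteq> v \<and> u \<in> V \<and> v \<in> V"
  using fg by (simp add: finite_graph_def)
lemma finE: "finite E"
proof -
  have "E \<subseteq> Pow V" using Esub by blast
  then show ?thesis using finV by (meson finite_Pow_iff finite_subset)
qed
lemma finU: "finite U" using finV finE by (simp add: U_def)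
lemma finA: "finite A" using finV AB by auto

lemma \<beta>_1: "\<beta> 1 = Inl ` A" by (simp add: \<beta>_def)
lemma \<beta>_2: "\<beta> 2 = Inr ` Sst" by (simp add: \<beta>_def)
lemma \<beta>_1': "\<beta> (Suc 0) = Inl ` A" by (simp add: \<beta>_def)
lemma \<beta>_sub: "\<beta> z \<subseteq> U"
proof -
  have SE: "Sst \<subseteq> E"
  proof
    fix e assume "e \<in> Sst"
    then obtain i j where "e = {f i, g j}" "i \<le> j" "j < n" unfolding Sst_def by blast
    moreover have "f i \<in> A" "g j \<in> B" using fbij gB \<open>i \<le> j\<close> \<open>j < n\<close> unfolding bij_betw_def by auto
    ultimately show "e \<in> E" using compl by auto
  qed
  have FE: "Ft t \<subseteq> E" for t using compl unfolding Ft_def by auto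
  have h2: "Inr ` Sst \<subseteq> U" using SE unfolding U_def by auto
  have h4: "Inr ` Ft t \<subseteq> U" for t using FE[of t] unfolding U_def by auto
  have h1: "Inl ` A \<subseteq> U" using AB unfolding U_def by auto
  have h3: "{Inl b | b. b \<in> B \<and> z - 3 \<in> fst (code b)} \<subseteq> U" using AB unfolding U_def by auto
  show ?thesis unfolding \<beta>_def using h1 h2 h3 h4 by (simp split: if_split)
qed

lemma Afi: "A = f ` {0..<n}" using fbij by (simp add: bij_betw_def)
lemma finj: "inj_on f {0..<n}" using fbij by (simp add: bij_betw_def)

lemma Nst_f: assumes "i < n" shows "Nst (Inl (f i)) = Inl ` g ` {i..<n}"
proof
  show "Nst (Inl (f i)) \<subseteq> Inl ` g ` {i..<n}"
  proof
    fix b assume "b \<in> Nst (Inl (f i))"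
    then obtain e where b: "b \<in> U" "b \<notin> Inl ` A" "e \<in> Inr ` Sst" "(Inl (f i), e) \<in> Rl" "(b, e) \<in> Rl"
      unfolding Nst_def by blast
    then obtain i' j where e: "e = Inr {f i', g j}" "i' \<le> j" "j < n" unfolding Sst_def by blast
    obtain w where w: "b = Inl w" "w \<in> {f i', g j}" using b(5) e unfolding Rl_def by auto
    have fi: "f i \<in> {f i', g j}" using b(4) e unfolding Rl_def by auto
    have "f i \<in> A" "g j \<in> B" "f i' \<in> A" using assms e gB Afi by auto
    then have "f i = f i'" using fi AB by auto
    then have "i = i'" using finj assms e by (auto dest: inj_onD)
    have "w = g j" using w b(2) \<open>f i' \<in> A\<close> by auto
    then show "b \<in> Inl ` g ` {i..<n}" using w e \<open>i = i'\<close> by auto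
  qed
next
  show "Inl ` g ` {i..<n} \<subseteq> Nst (Inl (f i))"
  proof
    fix b :: "'v + 'v set" assume "b \<in> Inl ` g ` {i..<n}"
    then obtain j where j: "b = Inl (g j)" "i \<le> j" "j < n" by auto
    have gj: "g j \<in> B" "f i \<in> A" using gB j assms Afi by auto
    then have "g j \<notin> A" using AB by auto
    have e: "{f i, g j} \<in> E" using compl gj by auto
    have "{f i, g j} \<in> Sst" using j unfolding Sst_def by auto
    then show "b \<in> Nst (Inl (f i))" unfolding Nst_def U_def Rl_def
      using j gj e AB \<open>g j \<notin> A\<close> by (auto intro!: bexI[of _ "Inr {f i, g j}"])
  qed
qed

lemma Nst_notA: "x \<notin> Inl ` A \<Longrightarrow> Nst x = {}" unfolding Nst_def by auto

lemma kS_f: "i < n \<Longrightarrow> kS (Inl (f i)) = n - i"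
proof -
  assume "i < n"
  have "inj_on g {i..<n}" using ginj by (rule inj_on_subset) auto
  then have "card (g ` {i..<n}) = n - i" by (simp add: card_image)
  moreover have "card ((Inl :: 'v \<Rightarrow> 'v + 'v set) ` (g ` {i..<n})) = card (g ` {i..<n})"
    by (rule card_image) simp
  ultimately show ?thesis using Nst_f[OF \<open>i < n\<close>] by (simp add: kS_def)
qed

lemma Nst_cases: "Nst x = {} \<or> (\<exists>i<n. x = Inl (f i) \<and> Nst x = Inl ` g ` {i..<n})"
proof (cases "x \<in> Inl ` A")
  case True then obtain i where "i < n" "x = Inl (f i)" using Afi by auto
  then show ?thesis using Nst_f by auto
qed (simp add: Nst_notA)

lemma Nst_le: "Nst x \<subseteq> Nst y \<longleftrightarrow> kS x \<le> kS y"
proof -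
  have c: "kS x = 0 \<longleftrightarrow> Nst x = {}" for x
    using Nst_cases[of x] by (auto simp: kS_def card_eq_0_iff intro: finite_imageI)
  show ?thesis
  proof (cases "Nst x = {}")
    case True then show ?thesis using c[of x] by auto
  next
    case False
    then obtain i where i: "i < n" "x = Inl (f i)" "Nst x = Inl ` g ` {i..<n}" using Nst_cases by blast
    show ?thesis
    proof (cases "Nst y = {}")
      case True then show ?thesis using False c[of y] c[of x] by auto
    next
      case False
      then obtain j where j: "j < n" "y = Inl (f j)" "Nst y = Inl ` g ` {j..<n}" using Nst_cases by blast
      have "Nst x \<subseteq> Nst y \<longleftrightarrow> j \<le> i"
      proof
        assume "Nst x \<subseteq> Nst y"
        moreover have "Inl (g i) \<in> Nst x" using i by auto
        ultimately have "Inl (g i) \<in> Inl ` g ` {j..<n}" using j by auto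
        then obtain j' where "g i = g j'" "j \<le> j'" "j' < n" by auto
        then show "j \<le> i" using ginj i by (auto dest: inj_onD)
      qed (use i j in auto)
      then show ?thesis using kS_f i j by auto
    qed
  qed
qed

lemma kS_inj: "inj_on kS (Inl ` A)"
proof
  fix x y assume "x \<in> Inl ` A" "y \<in> Inl ` A" "kS x = kS y"
  then obtain i j where "i < n" "j < n" "x = Inl (f i)" "y = Inl (f j)" using Afi by auto
  then have "n - i = n - j" using kS_f \<open>kS x = kS y\<close> by auto
  then have "i = j" using \<open>i < n\<close> \<open>j < n\<close> by arith
  then show "x = y" using \<open>x = Inl (f i)\<close> \<open>y = Inl (f j)\<close> by simp
qed

lemma kS_notA: "x \<notin> Inl ` A \<Longrightarrow> kS x = 0" by (simp add: kS_def Nst_notA)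
lemma kS_A: "x \<in> Inl ` A \<Longrightarrow> kS x > 0"
  using Afi kS_f by auto

lemma sat_stair: assumes "i \<notin> {10, 11}" "j \<notin> {10, 11}" shows
   "sat (U, Rl) \<alpha> \<beta> (stair i j) \<longleftrightarrow> Nst (\<alpha> i) \<subseteq> Nst (\<alpha> j)"
proof -
  have "sat (U, Rl) \<alpha> \<beta> (stair i j) \<longleftrightarrow> (\<forall>b\<in>U. (b \<notin> \<beta> 1 \<and> \<alpha> i \<in> \<beta> 1 \<and> (\<exists>e\<in>U. e \<in> \<beta> 2 \<and> (\<alpha> i, e) \<in> Rl \<and> (b, e) \<in> Rl))
      \<longrightarrow> (\<alpha> j \<in> \<beta> 1 \<and> (\<exists>e\<in>U. e \<in> \<beta> 2 \<and> (\<alpha> j, e) \<in> Rl \<and> (b, e) \<in> Rl)))"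
    using assms by (simp add: stair_def)
  also have "\<dots> \<longleftrightarrow> Nst (\<alpha> i) \<subseteq> Nst (\<alpha> j)" unfolding Nst_def \<beta>_1 \<beta>_2 by blast
  finally show ?thesis .
qed

lemma good_stair: assumes "{10, 11} \<subseteq> Bd" shows "good (U, Rl) \<beta> Bd stair kS"
  unfolding good_def fst_conv
proof (intro allI impI)
  fix \<alpha> :: "nat \<Rightarrow> 'v + 'v set" and i j assume "i \<notin> Bd" "j \<notin> Bd"
  then have "i \<notin> {10, 11}" "j \<notin> {10, 11}" using assms by auto
  then show "sat (U, Rl) \<alpha> \<beta> (stair i j) \<longleftrightarrow> kS (\<alpha> i) \<le> kS (\<alpha> j)"
    using sat_stair[OF \<open>i \<notin> {10, 11}\<close> \<open>j \<notin> {10, 11}\<close>] Nst_le by simp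
qed

lemma good_R: "good (U, Rl) \<beta> Bd (Rblk z) (kR z)"
  unfolding good_def by (simp add: Rblk_def kR_def)

lemma sat_bitf[simp]: "x \<noteq> 12 \<Longrightarrow> p \<noteq> 12 \<Longrightarrow> sat (U, Rl) \<alpha> \<beta> (bitf z x p) \<longleftrightarrow> bitF z (\<alpha> x) (\<alpha> p)"
  unfolding bitf_def bitF_def by simp


lemma AU: "Inl ` A \<subseteq> U" using AB unfolding U_def by auto
lemma ball_sub: "X \<subseteq> Y \<Longrightarrow> (\<forall>q\<in>Y. q \<in> X \<and> C q \<longrightarrow> R q) \<longleftrightarrow> (\<forall>q\<in>X. C q \<longrightarrow> R q)" by blast
lemma bex_sub: "X \<subseteq> Y \<Longrightarrow> (\<exists>p\<in>Y. p \<in> X \<and> Q p) \<longleftrightarrow> (\<exists>p\<in>X. Q p)" by blast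
lemma finAU: "finite (Inl ` A)" using finA by simp

lemma good_F: assumes "{10..<15} \<subseteq> Bd" shows "good (U, Rl) \<beta> Bd (Fblk z) (kF z)"
  unfolding good_def fst_conv
proof (intro allI impI)
  fix \<alpha> :: "nat \<Rightarrow> 'v + 'v set" and i j assume ij: "i \<notin> Bd" "j \<notin> Bd" "\<alpha> i \<in> U" "\<alpha> j \<in> U"
  have Bd: "10 \<in> Bd" "11 \<in> Bd" "12 \<in> Bd" "13 \<in> Bd" "14 \<in> Bd" using assms by (auto simp: subset_eq)
  have ne: "i \<noteq> 10" "i \<noteq> 11" "i \<noteq> 12" "i \<noteq> 13" "i \<noteq> 14"
     "j \<noteq> 10" "j \<noteq> 11" "j \<noteq> 12" "j \<noteq> 13" "j \<noteq> 14" using ij(1,2) Bd by auto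
  let ?x = "\<alpha> i" and ?y = "\<alpha> j"
  have "sat (U, Rl) \<alpha> \<beta> (Fblk z i j) \<longleftrightarrow> \<not> (\<exists>p\<in>U. p \<in> \<beta> 1 \<and> bitF z ?x p \<and> \<not> bitF z ?y p \<and>
      (\<forall>q\<in>U. (q \<in> \<beta> 1 \<and> \<not> Nst q \<subseteq> Nst p) \<longrightarrow> (bitF z ?x q \<longleftrightarrow> bitF z ?y q)))"
    using ne by (simp add: Fblk_def sat_stair)
  also have "\<dots> \<longleftrightarrow> \<not> (\<exists>p\<in>Inl ` A. bitF z ?x p \<and> \<not> bitF z ?y p \<and>
      (\<forall>q\<in>Inl ` A. kS p < kS q \<longrightarrow> (bitF z ?x q \<longleftrightarrow> bitF z ?y q)))"
    unfolding \<beta>_1 Nst_le not_le ball_sub[OF AU] bex_sub[OF AU] by (rule refl)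
  also have "\<dots> \<longleftrightarrow> \<not> (kF z ?y < kF z ?x)"
    unfolding kF_def by (subst lexblock[OF finAU kS_inj]) (rule refl)
  also have "\<dots> \<longleftrightarrow> kF z ?x \<le> kF z ?y" by (simp only: not_less)
  finally show "sat (U, Rl) \<alpha> \<beta> (Fblk z i j) \<longleftrightarrow> kF z ?x \<le> kF z ?y" .
qed

lemma la_map: "(\<And>z. good S b Bd (K z) (k z)) \<Longrightarrow> list_all2 (good S b Bd) (map K zs) (map k zs)"
  by (induction zs) auto

lemma good_v: assumes "{10..<15} \<subseteq> Bd" shows "list_all2 (good (U, Rl) \<beta> Bd) (vblocks r s) vkeys"
  unfolding vblocks_def vkeys_def
proof (rule list_all2_Cons[THEN iffD2], rule conjI)
  show "good (U, Rl) \<beta> Bd stair kS" by (rule good_stair) (use assms in auto)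
  show "list_all2 (good (U, Rl) \<beta> Bd) (map Rblk [3..<3 + r] @ map Fblk [3 + r..<3 + r + s])
     (map kR [3..<3 + r] @ map kF [3 + r..<3 + r + s])"
    by (intro list_all2_appendI la_map good_R good_F assms)
qed

lemma sat_vchain: "i \<notin> {10..<15} \<Longrightarrow> j \<notin> {10..<15} \<Longrightarrow> \<alpha> i \<in> U \<Longrightarrow> \<alpha> j \<in> U \<Longrightarrow>
   sat (U, Rl) \<alpha> \<beta> (chain (vblocks r s) i j) \<longleftrightarrow> lexle vkeys (\<alpha> i) (\<alpha> j)"
  using chain_sat[OF good_v[OF subset_refl], of i j \<alpha>] by simp

lemma PV: "P = Inl ` V"
proof
  show "P \<subseteq> Inl ` V"
  proof
    fix p assume p: "p \<in> P"
    then have "p \<in> U" unfolding P_def by auto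
    show "p \<in> Inl ` V"
    proof (cases p)
      case (Inl v) then show ?thesis using \<open>p \<in> U\<close> unfolding U_def by auto
    next
      case (Inr e)
      then have "e \<in> E" using \<open>p \<in> U\<close> unfolding U_def by auto
      then obtain u v where "e = {u, v}" "u \<in> V" using Esub by blast
      then have "(Inl u, p) \<in> Rl" "Inl u \<in> U" using Inr \<open>e \<in> E\<close> unfolding Rl_def U_def by auto
      then show ?thesis using p unfolding P_def by auto
    qed
  qed
next
  show "Inl ` V \<subseteq> P" unfolding P_def U_def Rl_def by auto
qed

lemma sum_inj:
  assumes "finite P0" "inj_on kp P0" "X \<subseteq> P0" "Y \<subseteq> P0"
    "(\<Sum>p\<in>X. (2::nat) ^ kp p) = (\<Sum>p\<in>Y. 2 ^ kp p)"
  shows "X = Y"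
proof -
  have fX: "finite X" "finite Y" using assms finite_subset by auto
  have ix: "inj_on kp X" "inj_on kp Y" using inj_on_subset[OF assms(2) assms(3)] inj_on_subset[OF assms(2) assms(4)] by auto
  have "(\<Sum>i\<in>kp ` X. (2::nat) ^ i) = (\<Sum>i\<in>kp ` Y. 2 ^ i)"
    using assms(5) by (simp add: sum.reindex[OF ix(1)] sum.reindex[OF ix(2)])
  then have "kp ` X = kp ` Y" using bin_inj fX by (metis finite_imageI)
  then show ?thesis using assms(2-4) by (metis inj_on_image_eq_iff)
qed

lemma bitF_F:
  assumes "v \<in> B" "a \<in> A" "t < s"
  shows "bitF (3 + r + t) (Inl v) (Inl a) \<longleftrightarrow> a \<in> snd (code v) t"
proof -
  have b: "\<beta> (3 + r + t) = Inr ` Ft t" using assms(3) by (simp add: \<beta>_def)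
  have "a \<noteq> v" "v \<notin> A" "a \<notin> B" using assms AB by auto
  show ?thesis
  proof
    assume "bitF (3 + r + t) (Inl v) (Inl a)"
    then obtain e where "e \<in> Ft t" "v \<in> e" "a \<in> e" unfolding bitF_def b Rl_def by auto
    then obtain a' b' where e: "e = {a', b'}" "a' \<in> A" "b' \<in> B" "a' \<in> snd (code b') t" unfolding Ft_def by auto
    have "v = b'" using e \<open>v \<in> e\<close> \<open>v \<notin> A\<close> by auto
    moreover have "a = a'" using e \<open>a \<in> e\<close> \<open>a \<notin> B\<close> by auto
    ultimately show "a \<in> snd (code v) t" using e by simp
  next
    assume "a \<in> snd (code v) t"
    then have "{a, v} \<in> Ft t" using assms unfolding Ft_def by auto
    moreover have "{a, v} \<in> E" using compl assms by auto
    moreover have "v \<in> V" "a \<in> V" using assms AB by auto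
    ultimately show "bitF (3 + r + t) (Inl v) (Inl a)" unfolding bitF_def b Rl_def U_def
      by (intro bexI[of _ "Inr {a, v}"]) auto
  qed
qed

lemma kR_R: "v \<in> B \<Longrightarrow> j < r \<Longrightarrow> kR (3 + j) (Inl v) = (if j \<in> fst (code v) then 1 else 0)"
  by (simp add: kR_def \<beta>_def)

lemma vinj:
  assumes "x \<in> Inl ` V" "y \<in> Inl ` V" "\<forall>k\<in>set vkeys. k x = k y"
  shows "x = y"
proof -
  obtain v w where vw: "x = Inl v" "y = Inl w" "v \<in> V" "w \<in> V" using assms by auto
  have kS: "kS x = kS y" using assms(3) unfolding vkeys_def by simp
  show ?thesis
  proof (cases "x \<in> Inl ` A")
    case True
    have "0 < kS y" using kS_A[OF True] kS by simp
    then have yA: "y \<in> Inl ` A" by (cases "y \<in> Inl ` A") (simp_all add: kS_notA)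
    show ?thesis using inj_onD[OF kS_inj kS True yA] .
  next
    case False
    have "kS y = 0" using kS_notA[OF False] kS by simp
    then have yA: "y \<notin> Inl ` A" using kS_A by (cases "y \<in> Inl ` A") fastforce+
    have vB: "v \<in> B" "w \<in> B" using False yA vw AB by auto
    have cv: "code v \<in> Pow {..<r} \<times> ({..<s} \<rightarrow>\<^sub>E Pow A)" "code w \<in> Pow {..<r} \<times> ({..<s} \<rightarrow>\<^sub>E Pow A)"
      using cB vB by auto
    have fstc: "fst (code v) = fst (code w)"
    proof -
      have "j \<in> fst (code v) \<longleftrightarrow> j \<in> fst (code w)" if "j < r" for j
      proof -
        have "kR (3 + j) \<in> kR ` set [3..<3+r]" using that by (intro imageI) simp
        then have "kR (3 + j) \<in> set vkeys" unfolding vkeys_def set_append set_map list.set by blast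
        then have "kR (3 + j) x = kR (3 + j) y" using assms(3) by blast
        then show ?thesis using kR_R[OF vB(1) that] kR_R[OF vB(2) that] vw
          by (cases "j \<in> fst (code v)"; cases "j \<in> fst (code w)") simp_all
      qed
      moreover have "fst (code v) \<subseteq> {..<r}" "fst (code w) \<subseteq> {..<r}" using cv by auto
      ultimately show ?thesis by blast
    qed
    have sndc: "snd (code v) t = snd (code w) t" for t
    proof (cases "t < s")
      case True
      have "kF (3 + r + t) \<in> kF ` set [3+r..<3+r+s]" using True by (intro imageI) simp
      then have "kF (3 + r + t) \<in> set vkeys" unfolding vkeys_def set_append set_map list.set by blast
      then have "kF (3 + r + t) x = kF (3 + r + t) y" using assms(3) by blast
      then have "{p \<in> Inl ` A. bitF (3 + r + t) x p} = {p \<in> Inl ` A. bitF (3 + r + t) y p}"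
        unfolding kF_def by (intro sum_inj[OF finAU kS_inj]) auto
      then have "a \<in> snd (code v) t \<longleftrightarrow> a \<in> snd (code w) t" if "a \<in> A" for a
        using bitF_F[OF vB(1) that True] bitF_F[OF vB(2) that True] vw that by blast
      moreover have cs: "snd (code v) \<in> {..<s} \<rightarrow>\<^sub>E Pow A" "snd (code w) \<in> {..<s} \<rightarrow>\<^sub>E Pow A"
        using cv by (auto simp: mem_Times_iff)
      moreover have "snd (code v) t \<subseteq> A" "snd (code w) t \<subseteq> A"
        using PiE_mem[OF cs(1), of t] PiE_mem[OF cs(2), of t] True by auto
      ultimately show ?thesis by blast
    next
      case False
      then show ?thesis using cv by (auto simp: PiE_def extensional_def)
    qed
    have "code v = code w" using fstc sndc by (simp add: prod_eq_iff fun_eq_iff)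
    then show ?thesis using cinj vB vw by (auto dest: inj_onD)
  qed
qed

lemma finP: "finite P" using finU unfolding P_def by simp

lemma kP_le: "p \<in> P \<Longrightarrow> q \<in> P \<Longrightarrow> lexle vkeys q p \<longleftrightarrow> kP q \<le> kP p"
proof -
  assume pq: "p \<in> P" "q \<in> P"
  have tot: "\<forall>p\<in>P. \<forall>q\<in>P. lexle vkeys p q \<or> lexle vkeys q p" by (intro ballI) (rule lexle_total)
  have tr: "\<forall>p\<in>P. \<forall>q\<in>P. \<forall>z\<in>P. lexle vkeys p q \<longrightarrow> lexle vkeys q z \<longrightarrow> lexle vkeys p z"
    by (intro ballI impI) (erule (1) lexle_trans)
  have "\<forall>p\<in>P. \<forall>q\<in>P. lexle vkeys q p \<longleftrightarrow> kP q \<le> kP p"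
    unfolding kP_def by (rule rank_key[OF finP tot tr])
  then show ?thesis using pq by blast
qed

lemma kP_inj: "inj_on kP P"
proof
  fix p q assume pq: "p \<in> P" "q \<in> P" "kP p = kP q"
  then have "lexle vkeys p q" "lexle vkeys q p" using kP_le by auto
  then have "\<forall>k\<in>set vkeys. k p = k q" using lexle_antisym[of vkeys p q] by blast
  then show "p = q" using vinj pq PV by auto
qed

lemma sat_Eblk: assumes "i \<notin> {20, 21, 22}" "j \<notin> {20, 21, 22}" "\<alpha> i \<in> U" "\<alpha> j \<in> U"
  shows "sat (U, Rl) \<alpha> \<beta> (Eblk r s i j) \<longleftrightarrow> kE (\<alpha> i) \<le> kE (\<alpha> j)"
proof -
  let ?x = "\<alpha> i" and ?y = "\<alpha> j"
  have "sat (U, Rl) \<alpha> \<beta> (Eblk r s i j) \<longleftrightarrow> \<not> (\<exists>p\<in>U. \<not> (\<exists>z\<in>U. (z, p) \<in> Rl) \<and> (p, ?x) \<in> Rl \<and> (p, ?y) \<notin> Rl \<and>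
      (\<forall>q\<in>U. (\<not> (\<exists>z\<in>U. (z, q) \<in> Rl) \<and> \<not> sat (U, Rl) (\<alpha>(20 := p, 21 := q)) \<beta> (chain (vblocks r s) 21 20))
          \<longrightarrow> ((q, ?x) \<in> Rl \<longleftrightarrow> (q, ?y) \<in> Rl)))"
    using assms(1,2) by (simp add: Eblk_def isV_def)
  also have "\<dots> \<longleftrightarrow> \<not> (\<exists>p\<in>P. (p, ?x) \<in> Rl \<and> (p, ?y) \<notin> Rl \<and>
      (\<forall>q\<in>P. kP p < kP q \<longrightarrow> ((q, ?x) \<in> Rl \<longleftrightarrow> (q, ?y) \<in> Rl)))"
  proof -
    have "sat (U, Rl) (\<alpha>(20 := p, 21 := q)) \<beta> (chain (vblocks r s) 21 20) \<longleftrightarrow> kP q \<le> kP p"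
      if "p \<in> P" "q \<in> P" for p q
    proof -
      have "p \<in> U" "q \<in> U" using that unfolding P_def by auto
      then have "sat (U, Rl) (\<alpha>(20 := p, 21 := q)) \<beta> (chain (vblocks r s) 21 20) \<longleftrightarrow> lexle vkeys q p"
        using sat_vchain[of 21 20 "\<alpha>(20 := p, 21 := q)"] by simp
      then show ?thesis using kP_le that by simp
    qed
    then have key: "\<not> sat (U, Rl) (\<alpha>(20 := p, 21 := q)) \<beta> (chain (vblocks r s) 21 20) \<longleftrightarrow> kP p < kP q"
      if "p \<in> P" "q \<in> P" for p q using that by (simp add: not_le)
    have Pm: "p \<in> P \<longleftrightarrow> p \<in> U \<and> \<not> (\<exists>z\<in>U. (z, p) \<in> Rl)" for p unfolding P_def by simp
    have "(\<exists>p\<in>U. \<not> (\<exists>z\<in>U. (z, p) \<in> Rl) \<and> (p, ?x) \<in> Rl \<and> (p, ?y) \<notin> Rl \<and>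
      (\<forall>q\<in>U. (\<not> (\<exists>z\<in>U. (z, q) \<in> Rl) \<and> \<not> sat (U, Rl) (\<alpha>(20 := p, 21 := q)) \<beta> (chain (vblocks r s) 21 20))
          \<longrightarrow> ((q, ?x) \<in> Rl \<longleftrightarrow> (q, ?y) \<in> Rl)))
      \<longleftrightarrow> (\<exists>p\<in>P. (p, ?x) \<in> Rl \<and> (p, ?y) \<notin> Rl \<and>
      (\<forall>q\<in>P. kP p < kP q \<longrightarrow> ((q, ?x) \<in> Rl \<longleftrightarrow> (q, ?y) \<in> Rl)))"
    proof
      assume "\<exists>p\<in>U. \<not> (\<exists>z\<in>U. (z, p) \<in> Rl) \<and> (p, ?x) \<in> Rl \<and> (p, ?y) \<notin> Rl \<and>
      (\<forall>q\<in>U. (\<not> (\<exists>z\<in>U. (z, q) \<in> Rl) \<and> \<not> sat (U, Rl) (\<alpha>(20 := p, 21 := q)) \<beta> (chain (vblocks r s) 21 20))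
          \<longrightarrow> ((q, ?x) \<in> Rl \<longleftrightarrow> (q, ?y) \<in> Rl))"
      then obtain p where p: "p \<in> U" "\<not> (\<exists>z\<in>U. (z, p) \<in> Rl)" "(p, ?x) \<in> Rl" "(p, ?y) \<notin> Rl"
        "\<forall>q\<in>U. (\<not> (\<exists>z\<in>U. (z, q) \<in> Rl) \<and> \<not> sat (U, Rl) (\<alpha>(20 := p, 21 := q)) \<beta> (chain (vblocks r s) 21 20))
          \<longrightarrow> ((q, ?x) \<in> Rl \<longleftrightarrow> (q, ?y) \<in> Rl)" by blast
      have pP: "p \<in> P" using p(1,2) Pm by blast
      show "\<exists>p\<in>P. (p, ?x) \<in> Rl \<and> (p, ?y) \<notin> Rl \<and> (\<forall>q\<in>P. kP p < kP q \<longrightarrow> ((q, ?x) \<in> Rl \<longleftrightarrow> (q, ?y) \<in> Rl))"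
      proof (intro bexI[OF _ pP] conjI ballI impI)
        fix q assume q: "q \<in> P" "kP p < kP q"
        then have "q \<in> U" "\<not> (\<exists>z\<in>U. (z, q) \<in> Rl)" using Pm by auto
        moreover have "\<not> sat (U, Rl) (\<alpha>(20 := p, 21 := q)) \<beta> (chain (vblocks r s) 21 20)" using key[OF pP q(1)] q(2) by simp
        ultimately show "(q, ?x) \<in> Rl \<longleftrightarrow> (q, ?y) \<in> Rl" using p(5) by blast
      qed (use p in auto)
    next
      assume "\<exists>p\<in>P. (p, ?x) \<in> Rl \<and> (p, ?y) \<notin> Rl \<and> (\<forall>q\<in>P. kP p < kP q \<longrightarrow> ((q, ?x) \<in> Rl \<longleftrightarrow> (q, ?y) \<in> Rl))"
      then obtain p where p: "p \<in> P" "(p, ?x) \<in> Rl" "(p, ?y) \<notin> Rl" "\<forall>q\<in>P. kP p < kP q \<longrightarrow> ((q, ?x) \<in> Rl \<longleftrightarrow> (q, ?y) \<in> Rl)"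
        by blast
      have pU: "p \<in> U" "\<not> (\<exists>z\<in>U. (z, p) \<in> Rl)" using p(1) Pm by auto
      show "\<exists>p\<in>U. \<not> (\<exists>z\<in>U. (z, p) \<in> Rl) \<and> (p, ?x) \<in> Rl \<and> (p, ?y) \<notin> Rl \<and>
      (\<forall>q\<in>U. (\<not> (\<exists>z\<in>U. (z, q) \<in> Rl) \<and> \<not> sat (U, Rl) (\<alpha>(20 := p, 21 := q)) \<beta> (chain (vblocks r s) 21 20))
          \<longrightarrow> ((q, ?x) \<in> Rl \<longleftrightarrow> (q, ?y) \<in> Rl))"
      proof (intro bexI[OF _ pU(1)] conjI ballI impI)
        fix q assume q: "q \<in> U" "\<not> (\<exists>z\<in>U. (z, q) \<in> Rl) \<and> \<not> sat (U, Rl) (\<alpha>(20 := p, 21 := q)) \<beta> (chain (vblocks r s) 21 20)"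
        then have qP: "q \<in> P" using Pm by auto
        then have "kP p < kP q" using key[OF p(1) qP] q(2) by simp
        then show "(q, ?x) \<in> Rl \<longleftrightarrow> (q, ?y) \<in> Rl" using p(4) qP by blast
      qed (use p pU in auto)
    qed
    then show ?thesis by simp
  qed
  also have "\<dots> \<longleftrightarrow> \<not> (kE ?y < kE ?x)"
    unfolding kE_def by (subst lexblock[OF finP kP_inj]) (rule refl)
  finally show ?thesis by (simp only: not_less)
qed

definition "tkeys = kE # vkeys"

lemma good_t: "list_all2 (good (U, Rl) \<beta> {10..<25}) (Eblk r s # vblocks r s) tkeys"
  unfolding tkeys_def
proof (rule list_all2_Cons[THEN iffD2], rule conjI)
  show "good (U, Rl) \<beta> {10..<25} (Eblk r s) kE" unfolding good_def fst_conv
  proof (intro allI impI)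
    fix \<alpha> :: "nat \<Rightarrow> 'v + 'v set" and i j assume "i \<notin> {10..<25}" "j \<notin> {10..<25}" "\<alpha> i \<in> U" "\<alpha> j \<in> U"
    moreover have "i \<notin> {20, 21, 22}" "j \<notin> {20, 21, 22}" using calculation by auto
    ultimately show "sat (U, Rl) \<alpha> \<beta> (Eblk r s i j) \<longleftrightarrow> kE (\<alpha> i) \<le> kE (\<alpha> j)" using sat_Eblk by blast
  qed
  show "list_all2 (good (U, Rl) \<beta> {10..<25}) (vblocks r s) vkeys" by (rule good_v) auto
qed

lemma kE_V: "v \<in> V \<Longrightarrow> kE (Inl v) = 0" unfolding kE_def Rl_def by simp

lemma kE_E: assumes "e \<in> E" shows "{p\<in>P. (p, Inr e) \<in> Rl} = Inl ` e" "e \<noteq> {}"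
proof -
  obtain u v where "e = {u, v}" "u \<in> V" "v \<in> V" using Esub assms by blast
  then show "{p\<in>P. (p, Inr e) \<in> Rl} = Inl ` e" "e \<noteq> {}" using assms unfolding PV Rl_def by auto
qed

lemma tinj: assumes "x \<in> U" "y \<in> U" "\<forall>k\<in>set tkeys. k x = k y" shows "x = y"
proof -
  have eE: "kE x = kE y" using assms(3) unfolding tkeys_def by simp
  have pos: "kE (Inr e) > 0" if "e \<in> E" for e
  proof -
    have "finite {p\<in>P. (p, Inr e) \<in> Rl}" using finP by simp
    moreover have "{p\<in>P. (p, Inr e) \<in> Rl} \<noteq> {}" using kE_E[OF that] by simp
    ultimately show ?thesis unfolding kE_def by (simp add: sum_pos)
  qed
  show ?thesis
  proof (cases x)
    case (Inl v)
    then have v: "v \<in> V" using assms unfolding U_def by auto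
    show ?thesis
    proof (cases y)
      case (Inl w)
      then have "w \<in> V" using assms unfolding U_def by auto
      then show ?thesis using vinj[of x y] assms(3) \<open>x = Inl v\<close> v Inl unfolding tkeys_def by auto
    next
      case (Inr e)
      then have "e \<in> E" using assms unfolding U_def by auto
      then show ?thesis using pos[OF \<open>e \<in> E\<close>] eE kE_V[OF v] Inr \<open>x = Inl v\<close> by simp
    qed
  next
    case (Inr e)
    then have e: "e \<in> E" using assms unfolding U_def by auto
    show ?thesis
    proof (cases y)
      case (Inl w)
      then have "w \<in> V" using assms unfolding U_def by auto
      then show ?thesis using pos[OF e] eE kE_V Inr Inl by simp
    next
      case (Inr e')
      then have e': "e' \<in> E" using assms unfolding U_def by auto
      have "{p\<in>P. (p, Inr e) \<in> Rl} = {p\<in>P. (p, Inr e') \<in> Rl}"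
        using eE \<open>x = Inr e\<close> Inr unfolding kE_def by (intro sum_inj[OF finP kP_inj]) auto
      then have "Inl ` e = (Inl ` e' :: ('v + 'v set) set)" using kE_E[OF e] kE_E[OF e'] by simp
      then have "e = e'" by (simp add: inj_image_eq_iff)
      then show ?thesis using \<open>x = Inr e\<close> Inr by simp
    qed
  qed
qed

lemma main: "linear_order_on U {(a, b). a \<in> U \<and> b \<in> U \<and> sat (U, Rl) (\<lambda>i. if i = 0 then a else b) \<beta> (phi r s)}"
proof -
  have n01: "(0::nat) \<notin> {10..<25}" "(1::nat) \<notin> {10..<25}" by auto
  have sateq: "sat (U, Rl) (\<lambda>i. if i = 0 then a else b) \<beta> (phi r s) \<longleftrightarrow> lexle tkeys a b" if "a \<in> U" "b \<in> U" for a b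
  proof -
    have "(\<lambda>i. if i = 0 then a else b) (0::nat) \<in> fst (U, Rl)" "(\<lambda>i. if i = 0 then a else b) (1::nat) \<in> fst (U, Rl)"
      using that by simp_all
    from chain_sat[OF good_t n01 this] show ?thesis unfolding phi_def by simp
  qed
  have eq: "{(a, b). a \<in> U \<and> b \<in> U \<and> sat (U, Rl) (\<lambda>i. if i = 0 then a else b) \<beta> (phi r s)}
     = {(a, b). a \<in> U \<and> b \<in> U \<and> lexle tkeys a b}" (is "?L = ?R")
    using sateq by blast
  show ?thesis unfolding eq linear_order_on_def partial_order_on_def preorder_on_def
    refl_on_def trans_on_def antisym_on_def total_on_def
  proof (intro conjI)
    show "?R \<subseteq> U \<times> U" by blast
    show "\<forall>x\<in>U. (x, x) \<in> ?R"
    proof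
      fix x assume "x \<in> U" then show "(x, x) \<in> ?R" using lexle_refl[of tkeys x] by simp
    qed
    show "\<forall>x\<in>UNIV. \<forall>y\<in>UNIV. \<forall>z\<in>UNIV. (x, y) \<in> ?R \<longrightarrow> (y, z) \<in> ?R \<longrightarrow> (x, z) \<in> ?R"
    proof (intro ballI impI)
      fix x y z assume "(x, y) \<in> ?R" "(y, z) \<in> ?R"
      then have "x \<in> U" "z \<in> U" "lexle tkeys x y" "lexle tkeys y z" by auto
      then show "(x, z) \<in> ?R" using lexle_trans[of tkeys x y z] by simp
    qed
    show "\<forall>x\<in>UNIV. \<forall>y\<in>UNIV. (x, y) \<in> ?R \<longrightarrow> (y, x) \<in> ?R \<longrightarrow> x = y"
    proof (intro ballI impI)
      fix x y assume "(x, y) \<in> ?R" "(y, x) \<in> ?R"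
      then have xy: "x \<in> U" "y \<in> U" "lexle tkeys x y" "lexle tkeys y x" by auto
      have "\<forall>k\<in>set tkeys. k x = k y"
      proof
        fix k assume "k \<in> set tkeys" then show "k x = k y" by (rule lexle_antisym[OF xy(3,4)])
      qed
      then show "x = y" by (rule tinj[OF xy(1,2)])
    qed
    show "\<forall>x\<in>U. \<forall>y\<in>U. x \<noteq> y \<longrightarrow> (x, y) \<in> ?R \<or> (y, x) \<in> ?R"
    proof (intro ballI impI)
      fix x y assume "x \<in> U" "y \<in> U"
      then show "(x, y) \<in> ?R \<or> (y, x) \<in> ?R" using lexle_total[of tkeys x y] by simp
    qed
  qed
qed

lemma params: "\<beta> i \<subseteq> U" by (rule \<beta>_sub)

end



lemma exists_gs:
  assumes fg: "finite_graph (V, E)" and nm: "n \<le> m" "m \<le> 2 ^ (s * n + r)"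
    and ext: "extends_Knm (V, E) n m"
  shows "\<exists>A B f g code. gs V E A B n s r f g code"
proof -
  obtain A B where AB: "A \<inter> B = {}" "A \<union> B = V" "card A = n" "card B = m"
    "\<forall>a\<in>A. \<forall>b\<in>B. {a, b} \<in> E" using ext unfolding extends_Knm_def by auto
  have finV: "finite V" using fg by (simp add: finite_graph_def)
  have fA: "finite A" "finite B" using finV AB(2) by (metis finite_Un)+
  obtain f where f: "bij_betw f {0..<n} A" using ex_bij_betw_nat_finite[OF fA(1)] AB(3) by auto
  obtain g where g: "g ` {0..<n} \<subseteq> B" "inj_on g {0..<n}"
    using card_le_inj[of "{0..<n}" B] fA AB(4) nm(1) by auto
  define CS where "CS = Pow {..<r} \<times> ({..<s} \<rightarrow>\<^sub>E Pow A)"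
  have fCS: "finite CS" unfolding CS_def using fA by (simp add: finite_PiE)
  have "card CS = 2 ^ r * (2 ^ n) ^ s" unfolding CS_def
    using fA AB(3) by (simp add: card_cartesian_product card_PiE card_Pow)
  also have "\<dots> = 2 ^ (s * n + r)" by (simp add: power_add power_mult mult.commute)
  finally have "card B \<le> card CS" using AB(4) nm(2) by simp
  then obtain code where c: "code ` B \<subseteq> CS" "inj_on code B" using card_le_inj[OF fA(2) fCS] by auto
  have "gs V E A B n s r f g code"
    by (unfold_locales) (use fg AB f g c in \<open>auto simp: CS_def\<close>)
  then show ?thesis by blast
qed

theorem lemma4p25:
  fixes s r :: nat and C :: "'v graph set"
  assumes "\<forall>G \<in> C. finite_graph G \<and>
             (\<exists>n m. n \<le> m \<and> m \<le> 2 ^ (s * n + r) \<and> extends_Knm G n m)"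
  shows "MSO2_orderable C"
  unfolding MSO2_orderable_def
proof (intro exI)
  show "defines_order (phi r s) (3 + r + s) (incidence ` C)"
    unfolding defines_order_def
  proof (intro conjI ballI impI)
    show "fo_free (phi r s) \<subseteq> {0, 1}" by (rule fo_phi)
    show "so_free (phi r s) \<subseteq> {..<3 + r + s}" by (rule so_phi)
    fix S assume "S \<in> incidence ` C"
    then obtain G where G: "G \<in> C" "S = incidence G" by blast
    obtain V E where VE: "G = (V, E)" by (cases G)
    obtain n m where nm: "n \<le> m" "m \<le> 2 ^ (s * n + r)" "extends_Knm (V, E) n m"
      using assms G VE by blast
    have "finite_graph (V, E)" using assms G VE by blast
    then obtain A B f g code where gsi: "gs V E A B n s r f g code" using exists_gs nm by blast
    have S: "S = (gs.U V E, gs.Rl V E)" using gs.inc[OF gsi] G VE by simp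
    show "\<exists>P. (\<forall>i<3 + r + s. P i \<subseteq> fst S) \<and>
           linear_order_on (fst S)
             {(a, b). a \<in> fst S \<and> b \<in> fst S \<and> sat S (\<lambda>i. if i = 0 then a else b) P (phi r s)}"
      unfolding S fst_conv
      by (intro exI[of _ "gs.\<beta> A B n s r f g code"] conjI allI impI gs.params[OF gsi] gs.main[OF gsi])
  qed
qed


end
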